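(* Let $\Omega\subset\mathbb{R}^d$ be a bounded domain and $k\ge1$. Suppose $f:\mathbb{R}^d\to\mathbb{R}$ can be represented by an MLP with width $W\ge1$, depth $L\ge1$ and activation function $\sigma_k(x)=\max(0,x)^k$. Then there exists a KAN $g$ with width $W$, depth at most $2L$, and grid size $G=2$ with $k$-th order B-spline functions such that $g(\mathbf{x})=f(\mathbf{x})$ for all $\mathbf{x}\in\Omega$.
   Context: An MLP of depth $L$ and width $W$ with activation $\sigma_k$ is a map $f=A_L\circ\sigma_k\circ A_{L-1}\circ\cdots\circ\sigma_k\circ A_1$, where the $A_l$ are affine maps, all intermediate (hidden) dimensions are at most $W$, and $\sigma_k$ is applied coordinatewise. A KAN of depth $D$ is a composition $\Phi_{D-1}\circ\cdots\circ\Phi_0$ of KAN layers, where a KAN layer from $\mathbb{R}^{m}$ to $\mathbb{R}^{m'}$ is a matrix of univariate functions $\{\phi_{j,i}\}$ acting by $(\Phi\mathbf{x})_j=\sum_{i=1}^{m}\phi_{j,i}(x_i)$; its width is the maximal hidden-layer dimension. Each univariate function has the form $\phi(x)=w_b\,\mathrm{silu}(x)+w_s\sum_i c_iB_i(x)$ with $\mathrm{silu}(x)=x/(1+e^{-x})$, real coefficients $w_b,w_s,c_i$, and $B_i$ the degree-$k$ B-splines on the knot sequence obtained from a uniform partition of an interval $[-R,R]$ into $G$ intervals extended uniformly by $k$ knots on each side ("grid size $G$ with $k$-th order B-splines"). *)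

theory Defs
  imports "HOL-Analysis.Analysis"
begin

definition sigma_pow :: "nat \<Rightarrow> real \<Rightarrow> real" where
  "sigma_pow k x = (max 0 x) ^ k"

definition silu :: "real \<Rightarrow> real" where
  "silu x = x / (1 + exp (- x))"

text \<open>B-splines by the Cox--de Boor recursion: bspline t p i is the degree p
  B-spline on the knots t i, ..., t (i+p+1).\<close>
fun bspline :: "(nat \<Rightarrow> real) \<Rightarrow> nat \<Rightarrow> nat \<Rightarrow> real \<Rightarrow> real" where
  "bspline t 0 i x = (if t i \<le> x \<and> x < t (Suc i) then 1 else 0)"
| "bspline t (Suc p) i x =
     (x - t i) / (t (i + Suc p) - t i) * bspline t p i x
   + (t (i + p + 2) - x) / (t (i + p + 2) - t (Suc i)) * bspline t p (Suc i) x"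

text \<open>Uniform partition of [-R,R] into G intervals, extended uniformly by k knots
  on each side; knot j (j = 0..G+2k) is -R + (j-k)*2R/G.\<close>
definition uniform_knots :: "real \<Rightarrow> nat \<Rightarrow> nat \<Rightarrow> nat \<Rightarrow> real" where
  "uniform_knots R G k j = - R + (real j - real k) * (2 * R / real G)"

definition kan_basis_fun :: "nat \<Rightarrow> nat \<Rightarrow> real \<Rightarrow> (real \<Rightarrow> real) \<Rightarrow> bool" where
  "kan_basis_fun k G R \<phi> \<longleftrightarrow>
     (\<exists>wb ws (c :: nat \<Rightarrow> real). \<forall>x. \<phi> x =
        wb * silu x + ws * (\<Sum>i<G + k. c i * bspline (uniform_knots R G k) k i x))"

text \<open>MLPs. Hidden vectors are nat-indexed, only the first m coordinates being used
  by a layer of input dimension m. The first affine map acts on R^d = real^'d.\<close>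
definition aff_in :: "(nat \<Rightarrow> 'd::finite \<Rightarrow> real) \<Rightarrow> (nat \<Rightarrow> real) \<Rightarrow> real^'d \<Rightarrow> nat \<Rightarrow> real" where
  "aff_in M b x = (\<lambda>j. (\<Sum>i\<in>UNIV. M j i * x $ i) + b j)"

definition aff :: "(nat \<Rightarrow> nat \<Rightarrow> real) \<Rightarrow> (nat \<Rightarrow> real) \<Rightarrow> nat \<Rightarrow> (nat \<Rightarrow> real) \<Rightarrow> nat \<Rightarrow> real" where
  "aff M b m h = (\<lambda>j. (\<Sum>i<m. M j i * h i) + b j)"

fun mlp_tail :: "nat \<Rightarrow> ((nat \<Rightarrow> nat \<Rightarrow> real) \<times> (nat \<Rightarrow> real)) list \<Rightarrow> nat list
                  \<Rightarrow> (nat \<Rightarrow> real) \<Rightarrow> (nat \<Rightarrow> real)" where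
  "mlp_tail k ((M, b) # As) (m # ms) h = mlp_tail k As ms (aff M b m (\<lambda>i. sigma_pow k (h i)))"
| "mlp_tail k _ _ h = h"

definition mlp_eval :: "nat \<Rightarrow> (nat \<Rightarrow> 'd::finite \<Rightarrow> real) \<Rightarrow> (nat \<Rightarrow> real)
    \<Rightarrow> ((nat \<Rightarrow> nat \<Rightarrow> real) \<times> (nat \<Rightarrow> real)) list \<Rightarrow> nat list \<Rightarrow> real^'d \<Rightarrow> real" where
  "mlp_eval k M0 b0 As hs x = mlp_tail k As hs (aff_in M0 b0 x) 0"

text \<open>f is represented by an MLP of depth L (L affine maps A_1..A_L), hidden
  dimensions hs (L-1 of them) all at most W, scalar output (coordinate 0).\<close>
definition is_mlp :: "nat \<Rightarrow> nat \<Rightarrow> nat \<Rightarrow> (real^'d::finite \<Rightarrow> real) \<Rightarrow> bool" where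
  "is_mlp k W L f \<longleftrightarrow> 1 \<le> L \<and>
     (\<exists>(M0 :: nat \<Rightarrow> 'd \<Rightarrow> real) b0 As hs.
        length As = L - 1 \<and> length hs = L - 1 \<and> (\<forall>m\<in>set hs. m \<le> W) \<and>
        (\<forall>x. f x = mlp_eval k M0 b0 As hs x))"

definition kan_in :: "(nat \<Rightarrow> 'd::finite \<Rightarrow> real \<Rightarrow> real) \<Rightarrow> real^'d \<Rightarrow> nat \<Rightarrow> real" where
  "kan_in \<Phi> x = (\<lambda>j. \<Sum>i\<in>UNIV. \<Phi> j i (x $ i))"

definition kan_layer :: "(nat \<Rightarrow> nat \<Rightarrow> real \<Rightarrow> real) \<Rightarrow> nat \<Rightarrow> (nat \<Rightarrow> real) \<Rightarrow> nat \<Rightarrow> real" where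
  "kan_layer \<Phi> m h = (\<lambda>j. \<Sum>i<m. \<Phi> j i (h i))"

fun kan_tail :: "(nat \<Rightarrow> nat \<Rightarrow> real \<Rightarrow> real) list \<Rightarrow> nat list \<Rightarrow> (nat \<Rightarrow> real) \<Rightarrow> (nat \<Rightarrow> real)" where
  "kan_tail (\<Phi> # \<Phi>s) (m # ms) h = kan_tail \<Phi>s ms (kan_layer \<Phi> m h)"
| "kan_tail _ _ h = h"

definition kan_eval :: "(nat \<Rightarrow> 'd::finite \<Rightarrow> real \<Rightarrow> real) \<Rightarrow> (nat \<Rightarrow> nat \<Rightarrow> real \<Rightarrow> real) list
    \<Rightarrow> nat list \<Rightarrow> real^'d \<Rightarrow> real" where
  "kan_eval \<Phi>0 \<Phi>s hs x = kan_tail \<Phi>s hs (kan_in \<Phi>0 x) 0"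

definition is_kan :: "nat \<Rightarrow> nat \<Rightarrow> nat \<Rightarrow> nat \<Rightarrow> (real^'d::finite \<Rightarrow> real) \<Rightarrow> bool" where
  "is_kan k G W D g \<longleftrightarrow> 1 \<le> D \<and>
     (\<exists>R (\<Phi>0 :: nat \<Rightarrow> 'd \<Rightarrow> real \<Rightarrow> real) \<Phi>s hs. R > 0 \<and>
        length \<Phi>s = D - 1 \<and> length hs = D - 1 \<and> (\<forall>m\<in>set hs. m \<le> W) \<and>
        (\<forall>j i. kan_basis_fun k G R (\<Phi>0 j i)) \<and>
        (\<forall>\<Phi>\<in>set \<Phi>s. \<forall>j i. kan_basis_fun k G R (\<Phi> j i)) \<and>
        (\<forall>x. g x = kan_eval \<Phi>0 \<Phi>s hs x))"

end

theory Submission imports Defs begin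

lemma bs_support:
  assumes tj: "\<And>j. t j = a + real j * h" and h: "h > 0"
  shows "x < t i \<or> t (i + p + 1) \<le> x \<Longrightarrow> bspline t p i x = 0"
proof (induction p arbitrary: i)
  case 0
  then show ?case using h by (auto simp: tj)
next
  case (Suc p)
  have "x < t i \<or> t (i + p + 1) \<le> x"
    using Suc.prems h by (auto simp: tj algebra_simps)
  hence a: "bspline t p i x = 0" by (rule Suc.IH)
  have "x < t (Suc i) \<or> t (Suc i + p + 1) \<le> x"
    using Suc.prems h by (auto simp: tj algebra_simps)
  hence b: "bspline t p (Suc i) x = 0" by (rule Suc.IH)
  show ?case by (simp add: a b)
qed

lemma bs_left:
  assumes tj: "\<And>j. t j = a + real j * h" and h: "h > 0"
  shows "x < t (Suc i) \<Longrightarrow> bspline t p i x = (if t i \<le> x then (x - t i)^p / (fact p * h^p) else 0)"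
proof (induction p)
  case 0
  then show ?case by auto
next
  case (Suc p)
  have b: "bspline t p (Suc i) x = 0"
    by (rule bs_support[OF tj h]) (use Suc.prems in auto)
  have d: "t (Suc (i + p)) - t i = real (Suc p) * h" by (simp add: tj algebra_simps)
  have "bspline t (Suc p) i x = (x - t i) / (real (Suc p) * h) * bspline t p i x"
    by (simp add: b d)
  also have "\<dots> = (if t i \<le> x then (x - t i)^Suc p / (fact (Suc p) * h^Suc p) else 0)"
    using Suc h by (simp add: field_simps)
  finally show ?case .
qed

lemma bs_rec_sum:
  assumes tj: "\<And>j. t j = a + real j * h" and h: "h > 0"
    and x1: "t (Suc p) \<le> x" and x2: "x < t n"
  shows "(\<Sum>j<n. c j * bspline t (Suc p) j x) =
     (\<Sum>j<n. (c j * (x - t j) + c (j - 1) * (t (j + p + 1) - x)) / (real (Suc p) * h) * bspline t p j x)"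
proof -
  define A where "A j = c j * (x - t j) / (real (Suc p) * h) * bspline t p j x" for j
  define F where "F j = c (j - 1) * (t (j + p + 1) - x) / (real (Suc p) * h) * bspline t p j x" for j
  have d1: "t (j + Suc p) - t j = real (Suc p) * h" for j by (simp add: tj algebra_simps)
  have d2: "t (j + p + 2) - t (Suc j) = real (Suc p) * h" for j by (simp add: tj algebra_simps)
  have d3: "t (Suc (j + p)) - t j = real (Suc p) * h" for j by (simp add: tj algebra_simps)
  have d4: "t (Suc (Suc (j + p))) - t (Suc j) = real (Suc p) * h" for j by (simp add: tj algebra_simps)
  have "(\<Sum>j<n. c j * bspline t (Suc p) j x) = (\<Sum>j<n. A j + F (Suc j))"
    by (rule sum.cong) (simp_all add: A_def F_def d1 d2 d3 d4 algebra_simps)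
  also have "\<dots> = (\<Sum>j<n. A j) + (\<Sum>j<n. F (Suc j))" by (simp add: sum.distrib)
  also have "(\<Sum>j<n. F (Suc j)) = (\<Sum>j<n. F j) + F n - F 0"
  proof -
    have "(\<Sum>j<Suc n. F j) = F 0 + (\<Sum>j<n. F (Suc j))" by (rule sum.lessThan_Suc_shift)
    moreover have "(\<Sum>j<Suc n. F j) = (\<Sum>j<n. F j) + F n" by simp
    ultimately show ?thesis by linarith
  qed
  also have "F n = 0" unfolding F_def
    by (simp add: bs_support[OF tj h] x2)
  also have "F 0 = 0" unfolding F_def
    using x1 by (simp add: bs_support[OF tj h])
  finally have "(\<Sum>j<n. c j * bspline t (Suc p) j x) = (\<Sum>j<n. A j + F j)"
    by (simp add: sum.distrib)
  also have "\<dots> = (\<Sum>j<n. (c j * (x - t j) + c (j - 1) * (t (j + p + 1) - x)) / (real (Suc p) * h) * bspline t p j x)"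
  proof (rule sum.cong)
    fix j
    have hp: "real (Suc p) * h \<noteq> 0" using h by simp
    show "A j + F j = (c j * (x - t j) + c (j - 1) * (t (j + p + 1) - x)) / (real (Suc p) * h) * bspline t p j x"
      unfolding A_def F_def using hp by (simp add: divide_simps) (simp add: algebra_simps)
  qed simp
  finally show ?thesis .
qed

lemma bs_unity:
  assumes tj: "\<And>j. t j = a + real j * h" and h: "h > 0"
  shows "t p \<le> x \<Longrightarrow> x < t n \<Longrightarrow> (\<Sum>j<n. bspline t p j x) = 1"
proof (induction p arbitrary: n)
  case 0
  have "t 0 \<le> x \<Longrightarrow> (\<Sum>j<n. bspline t 0 j x) = (if x < t n then 1 else 0)" for n
  proof (induction n)
    case 0 then show ?case using h by (simp add: tj)
  next
    case (Suc n)
    then show ?case using h by (auto simp: tj distrib_right)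
  qed
  then show ?case using 0 by simp
next
  case (Suc p)
  have "(\<Sum>j<n. bspline t (Suc p) j x) = (\<Sum>j<n. 1 * bspline t (Suc p) j x)" by simp
  also have "\<dots> = (\<Sum>j<n. (1 * (x - t j) + 1 * (t (j + p + 1) - x)) / (real (Suc p) * h) * bspline t p j x)"
    by (rule bs_rec_sum[OF tj h]) (use Suc.prems in auto)
  also have "\<dots> = (\<Sum>j<n. bspline t p j x)"
  proof (rule sum.cong)
    fix j
    have "(1 * (x - t j) + 1 * (t (j + p + 1) - x)) = real (Suc p) * h" by (simp add: tj algebra_simps)
    moreover have "real (Suc p) * h \<noteq> 0" using h by simp
    ultimately show "(1 * (x - t j) + 1 * (t (j + p + 1) - x)) / (real (Suc p) * h) * bspline t p j x = bspline t p j x"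
      by simp
  qed simp
  also have "\<dots> = 1"
    by (rule Suc.IH) (use Suc.prems h in \<open>auto simp: tj distrib_right\<close>)
  finally show ?case .
qed

lemma sum_lin: fixes \<alpha> \<beta> :: real shows "(\<Sum>j\<in>A. (\<alpha> * T j + \<beta>) * B j) = \<alpha> * (\<Sum>j\<in>A. T j * B j) + \<beta> * (\<Sum>j\<in>A. B j)"
  by (simp add: sum.distrib sum_distrib_left algebra_simps)

lemma bs_linear:
  assumes tj: "\<And>j. t j = a + real j * h" and h: "h > 0"
  shows "t p \<le> x \<Longrightarrow> x < t n \<Longrightarrow>
    real p * (\<Sum>j<n. (t j + h * (real p + 1) / 2) * bspline t p j x) = real p * x"
proof (induction p arbitrary: n)
  case 0
  then show ?case by simp
next
  case (Suc p)
  define g where "g j = t j + h * (real (Suc p) + 1) / 2" for j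
  have x1: "t p \<le> x" using Suc.prems h by (auto simp: tj distrib_right)
  have "(\<Sum>j<n. g j * bspline t (Suc p) j x) =
     (\<Sum>j<n. (g j * (x - t j) + g (j - 1) * (t (j + p + 1) - x)) / (real (Suc p) * h) * bspline t p j x)"
    by (rule bs_rec_sum[OF tj h]) (use Suc.prems in auto)
  also have "\<dots> = (\<Sum>j<n. (real p / real (Suc p) * (t j + h * (real p + 1) / 2) + x / real (Suc p)) * bspline t p j x)"
  proof (rule sum.cong)
    fix j assume "j \<in> {..<n}"
    show "(g j * (x - t j) + g (j - 1) * (t (j + p + 1) - x)) / (real (Suc p) * h) * bspline t p j x =
      (real p / real (Suc p) * (t j + h * (real p + 1) / 2) + x / real (Suc p)) * bspline t p j x"
    proof (cases j)
      case 0
      have "bspline t p j x = 0" using Suc.prems 0 by (intro bs_support[OF tj h]) auto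
      then show ?thesis by simp
    next
      case (Suc j')
      have num: "g j * (x - t j) + g (j - 1) * (t (j + p + 1) - x) = h *
         (real p * (t j + h * (real p + 1) / 2) + x)"
        using Suc by (simp add: g_def tj field_simps)
      define Y where "Y = real p * (t j + h * (real p + 1) / 2) + x"
      have "h \<noteq> 0" using h by simp
      hence e1: "h * Y / (real (Suc p) * h) = Y / real (Suc p)" by simp
      have e2: "real p / real (Suc p) * (t j + h * (real p + 1) / 2) + x / real (Suc p) = Y / real (Suc p)"
        unfolding Y_def by (simp add: add_divide_distrib)
      show ?thesis unfolding num Y_def[symmetric] e1 e2 ..
    qed
  qed simp
  also have "\<dots> = real p / real (Suc p) * (\<Sum>j<n. (t j + h * (real p + 1) / 2) * bspline t p j x)
       + x / real (Suc p) * (\<Sum>j<n. bspline t p j x)"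
    by (rule sum_lin)
  also have "(\<Sum>j<n. bspline t p j x) = 1" by (rule bs_unity[OF tj h x1 Suc.prems(2)])
  finally have e: "(\<Sum>j<n. g j * bspline t (Suc p) j x) =
     real p / real (Suc p) * (\<Sum>j<n. (t j + h * (real p + 1) / 2) * bspline t p j x) + x / real (Suc p)"
    by simp
  have ih: "real p * (\<Sum>j<n. (t j + h * (real p + 1) / 2) * bspline t p j x) = real p * x"
    by (rule Suc.IH[OF x1 Suc.prems(2)])
  have "real (Suc p) * (\<Sum>j<n. g j * bspline t (Suc p) j x) = real p * x + x"
  proof -
    have gen: "real (Suc p) * (real p / real (Suc p) * S + x / real (Suc p)) = real p * S + x" for S
    proof -
      have nz: "real (Suc p) \<noteq> 0" by simp
      show ?thesis by (simp only: distrib_left) (use nz in simp)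
    qed
    show ?thesis unfolding e gen ih ..
  qed
  also have "real p * x + x = real (Suc p) * x" by (simp add: algebra_simps)
  finally show ?case by (simp only: g_def)
qed


lemma uk: "uniform_knots R 2 k j = (- R - real k * R) + real j * R"
  by (simp add: uniform_knots_def algebra_simps)

definition splf :: "nat \<Rightarrow> real \<Rightarrow> (nat \<Rightarrow> real) \<Rightarrow> real \<Rightarrow> real" where
  "splf k R c y = (\<Sum>i<2 + k. c i * bspline (uniform_knots R 2 k) k i y)"

definition affc :: "nat \<Rightarrow> real \<Rightarrow> real \<Rightarrow> real \<Rightarrow> nat \<Rightarrow> real" where
  "affc k R \<alpha> \<beta> = (\<lambda>j. \<alpha> * (uniform_knots R 2 k j + R * (real k + 1) / 2) + \<beta>)"

definition sigc :: "nat \<Rightarrow> real \<Rightarrow> nat \<Rightarrow> real" where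
  "sigc k R = (\<lambda>j. if j = k + 1 then fact k * R ^ k else 0)"

lemma splf_basis: "kan_basis_fun k 2 R (splf k R c)"
  unfolding kan_basis_fun_def splf_def
  by (rule exI[of _ 0], rule exI[of _ 1], rule exI[of _ c]) simp

lemma aff_ok:
  assumes k: "1 \<le> k" and R: "R > 0" and y: "- R \<le> y" "y < R"
  shows "splf k R (affc k R \<alpha> \<beta>) y = \<alpha> * y + \<beta>"
proof -
  let ?t = "uniform_knots R 2 k"
  have tj: "\<And>j. ?t j = (- R - real k * R) + real j * R" by (rule uk)
  have t1: "?t k \<le> y" using y by (simp add: tj)
  have t2: "y < ?t (2 + k)" using y by (simp add: tj algebra_simps)
  have u: "(\<Sum>j<2 + k. bspline ?t k j y) = 1" by (rule bs_unity[OF tj R t1 t2])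
  have l: "real k * (\<Sum>j<2 + k. (?t j + R * (real k + 1) / 2) * bspline ?t k j y) = real k * y"
    by (rule bs_linear[OF tj R t1 t2])
  hence l': "(\<Sum>j<2 + k. (?t j + R * (real k + 1) / 2) * bspline ?t k j y) = y" using k by simp
  have "splf k R (affc k R \<alpha> \<beta>) y = \<alpha> * (\<Sum>j<2 + k. (?t j + R * (real k + 1) / 2) * bspline ?t k j y)
      + \<beta> * (\<Sum>j<2 + k. bspline ?t k j y)"
    unfolding splf_def affc_def by (rule sum_lin)
  then show ?thesis using u l' by simp
qed

lemma sig_ok:
  assumes k: "1 \<le> k" and R: "R > 0" and y: "y < R"
  shows "splf k R (sigc k R) y = sigma_pow k y"
proof -
  let ?t = "uniform_knots R 2 k"
  have tj: "\<And>j. ?t j = (- R - real k * R) + real j * R" by (rule uk)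
  have "splf k R (sigc k R) y = (\<Sum>i<2 + k. if i = k + 1 then fact k * R ^ k * bspline ?t k i y else 0)"
    unfolding splf_def sigc_def by (rule sum.cong) auto
  also have "\<dots> = fact k * R ^ k * bspline ?t k (k + 1) y"
    by (subst sum.delta) auto
  also have "bspline ?t k (k + 1) y = (if ?t (k + 1) \<le> y then (y - ?t (k + 1)) ^ k / (fact k * R ^ k) else 0)"
    by (rule bs_left[OF tj R]) (use y in \<open>simp add: tj algebra_simps\<close>)
  also have "?t (k + 1) = 0" by (simp add: tj algebra_simps)
  finally have e: "splf k R (sigc k R) y = fact k * R ^ k * (if 0 \<le> y then y ^ k / (fact k * R ^ k) else 0)" by simp
  show ?thesis
  proof (cases "0 \<le> y")
    case True
    then show ?thesis using e R by (simp add: sigma_pow_def max_def)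
  next
    case False
    then show ?thesis using e k by (simp add: sigma_pow_def max_def)
  qed
qed


type_synonym lay = "(nat \<Rightarrow> nat \<Rightarrow> real) \<times> (nat \<Rightarrow> real)"

definition sigL :: "nat \<Rightarrow> real \<Rightarrow> nat \<Rightarrow> nat \<Rightarrow> real \<Rightarrow> real" where
  "sigL k R = (\<lambda>j i. splf k R (if i = j then sigc k R else (\<lambda>_. 0)))"

definition affL :: "nat \<Rightarrow> real \<Rightarrow> (nat \<Rightarrow> nat \<Rightarrow> real) \<Rightarrow> (nat \<Rightarrow> real) \<Rightarrow> nat \<Rightarrow> nat \<Rightarrow> nat \<Rightarrow> real \<Rightarrow> real" where
  "affL k R M b m = (\<lambda>j i. splf k R (affc k R (if i < m then M j i else 0) (b j / real (max m 1))))"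

fun kl :: "nat \<Rightarrow> real \<Rightarrow> lay list \<Rightarrow> nat list \<Rightarrow> (nat \<Rightarrow> nat \<Rightarrow> real \<Rightarrow> real) list" where
  "kl k R ((M, b) # As) (m # ms) = sigL k R # affL k R M b m # kl k R As ms"
| "kl k R _ _ = []"

fun kd :: "lay list \<Rightarrow> nat list \<Rightarrow> nat list" where
  "kd ((M, b) # As) (m # ms) = max m 1 # max m 1 # kd As ms"
| "kd _ _ = []"

fun okp :: "nat \<Rightarrow> real \<Rightarrow> lay list \<Rightarrow> nat list \<Rightarrow> (nat \<Rightarrow> real) \<Rightarrow> bool" where
  "okp k R ((M, b) # As) (m # ms) h =
     ((\<forall>i<max m 1. h i < R \<and> sigma_pow k (h i) < R) \<and> okp k R As ms (aff M b m (\<lambda>i. sigma_pow k (h i))))"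
| "okp k R _ _ h = True"

lemma okp_mono: "okp k R As ms h \<Longrightarrow> R \<le> R' \<Longrightarrow> okp k R' As ms h"
  by (induction k R As ms h rule: okp.induct) force+

lemma kl_len: "length As = length ms \<Longrightarrow> length (kl k R As ms) = 2 * length As"
  by (induction k R As ms rule: kl.induct) auto

lemma kd_len: "length As = length ms \<Longrightarrow> length (kd As ms) = 2 * length As"
  by (induction As ms rule: kd.induct) auto

lemma kd_set: "d \<in> set (kd As ms) \<Longrightarrow> \<exists>m\<in>set ms. d = max m 1"
  by (induction As ms rule: kd.induct) auto

lemma kl_set: "\<Phi> \<in> set (kl k R As ms) \<Longrightarrow> \<exists>c. \<Phi> j i = splf k R c"
  by (induction k R As ms rule: kl.induct) (auto simp: sigL_def affL_def)

lemma sigma_nonneg: "0 \<le> sigma_pow k y"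
  by (simp add: sigma_pow_def)

lemma layer_ok:
  assumes k: "1 \<le> k" and R: "R > 0"
    and hr: "\<forall>i<max m 1. h i < R \<and> sigma_pow k (h i) < R"
  shows "kan_layer (affL k R M b m) (max m 1) (kan_layer (sigL k R) (max m 1) h) = aff M b m (\<lambda>i. sigma_pow k (h i))"
proof
  fix j
  have s: "kan_layer (sigL k R) (max m 1) h i = sigma_pow k (h i)" if "i < max m 1" for i
  proof -
    have "kan_layer (sigL k R) (max m 1) h i = (\<Sum>l<max m 1. if l = i then sigma_pow k (h l) else 0)"
      unfolding kan_layer_def sigL_def
    proof (rule sum.cong)
      fix l assume "l \<in> {..<max m 1}"
      then show "splf k R (if l = i then sigc k R else (\<lambda>_. 0)) (h l) = (if l = i then sigma_pow k (h l) else 0)"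
        using sig_ok[OF k R] hr by (auto simp: splf_def)
    qed simp
    also have "\<dots> = sigma_pow k (h i)" using that by simp
    finally show ?thesis .
  qed
  have "kan_layer (affL k R M b m) (max m 1) (kan_layer (sigL k R) (max m 1) h) j
      = (\<Sum>i<max m 1. affL k R M b m j i (kan_layer (sigL k R) (max m 1) h i))"
    by (simp add: kan_layer_def)
  also have "\<dots> = (\<Sum>i<max m 1. (if i < m then M j i else 0) * sigma_pow k (h i) + b j / real (max m 1))"
  proof (rule sum.cong)
    fix i assume i: "i \<in> {..<max m 1}"
    have "- R \<le> sigma_pow k (h i)" using sigma_nonneg[of k "h i"] R by linarith
    moreover have "sigma_pow k (h i) < R" using hr i by auto
    ultimately show "affL k R M b m j i (kan_layer (sigL k R) (max m 1) h i)
      = (if i < m then M j i else 0) * sigma_pow k (h i) + b j / real (max m 1)"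
      unfolding affL_def using s i aff_ok[OF k R] by auto
  qed simp
  also have "\<dots> = (\<Sum>i<max m 1. (if i < m then M j i * sigma_pow k (h i) else 0)) + b j"
    by (simp add: sum.distrib, rule sum.cong, auto)
  also have "(\<Sum>i<max m 1. (if i < m then M j i * sigma_pow k (h i) else 0)) = (\<Sum>i<m. M j i * sigma_pow k (h i))"
    by (simp add: sum.If_cases) (rule sum.cong, auto)
  finally show "kan_layer (affL k R M b m) (max m 1) (kan_layer (sigL k R) (max m 1) h) j = aff M b m (\<lambda>i. sigma_pow k (h i)) j"
    by (simp add: aff_def)
qed

lemma tail_ok:
  assumes k: "1 \<le> k" and R: "R > 0"
  shows "okp k R As ms h \<Longrightarrow> kan_tail (kl k R As ms) (kd As ms) h = mlp_tail k As ms h"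
proof (induction As ms arbitrary: h rule: kd.induct)
  case (1 M b As m ms)
  have hr: "\<forall>i<max m 1. h i < R \<and> sigma_pow k (h i) < R"
    and ok: "okp k R As ms (aff M b m (\<lambda>i. sigma_pow k (h i)))" using "1.prems" by auto
  show ?case using layer_ok[OF k R hr] "1.IH"[OF ok] by simp
qed auto


definition bndf :: "(nat \<Rightarrow> real) set \<Rightarrow> bool" where
  "bndf H \<longleftrightarrow> (\<forall>N. \<exists>B. \<forall>h\<in>H. \<forall>i<N. \<bar>h i\<bar> \<le> B)"

lemma sig_bound: fixes y B :: real shows "\<bar>y\<bar> \<le> B \<Longrightarrow> \<bar>sigma_pow k y\<bar> \<le> \<bar>B\<bar> ^ k"
proof -
  assume a: "\<bar>y\<bar> \<le> B"
  have "0 \<le> max 0 y" by simp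
  moreover have "max 0 y \<le> \<bar>B\<bar>" using a by auto
  ultimately have "max 0 y ^ k \<le> \<bar>B\<bar> ^ k" by (intro power_mono)
  then show ?thesis by (simp add: sigma_pow_def)
qed

lemma sum_bound_all:
  fixes E :: "nat \<Rightarrow> real"
  assumes "\<And>j. 0 \<le> E j" "j < N"
  shows "E j \<le> (\<Sum>l<N. E l)"
  by (rule member_le_sum) (use assms in auto)

lemma aff_bndf:
  assumes "bndf H"
  shows "bndf ((\<lambda>h. aff M b m (\<lambda>i. sigma_pow k (h i))) ` H)"
  unfolding bndf_def
proof
  fix N
  obtain B where B: "\<forall>h\<in>H. \<forall>i<m. \<bar>h i\<bar> \<le> B" using assms unfolding bndf_def by blast
  define E where "E j = (\<Sum>i<m. \<bar>M j i\<bar> * \<bar>B\<bar> ^ k) + \<bar>b j\<bar>" for j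
  have E0: "0 \<le> E j" for j unfolding E_def by (intro add_nonneg_nonneg sum_nonneg) auto
  have "\<bar>aff M b m (\<lambda>i. sigma_pow k (h i)) j\<bar> \<le> (\<Sum>l<N. E l)" if h: "h \<in> H" and j: "j < N" for h j
  proof -
    have "\<bar>aff M b m (\<lambda>i. sigma_pow k (h i)) j\<bar> \<le> \<bar>\<Sum>i<m. M j i * sigma_pow k (h i)\<bar> + \<bar>b j\<bar>"
      unfolding aff_def by (rule abs_triangle_ineq)
    also have "\<bar>\<Sum>i<m. M j i * sigma_pow k (h i)\<bar> \<le> (\<Sum>i<m. \<bar>M j i * sigma_pow k (h i)\<bar>)"
      by (rule sum_abs)
    also have "\<dots> \<le> (\<Sum>i<m. \<bar>M j i\<bar> * \<bar>B\<bar> ^ k)"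
    proof (rule sum_mono)
      fix i assume "i \<in> {..<m}"
      hence "\<bar>sigma_pow k (h i)\<bar> \<le> \<bar>B\<bar> ^ k" using B h sig_bound[of "h i" B k] by auto
      then show "\<bar>M j i * sigma_pow k (h i)\<bar> \<le> \<bar>M j i\<bar> * \<bar>B\<bar> ^ k"
        by (simp add: abs_mult mult_left_mono)
    qed
    also have "(\<Sum>i<m. \<bar>M j i\<bar> * \<bar>B\<bar> ^ k) + \<bar>b j\<bar> = E j" by (simp add: E_def)
    also have "E j \<le> (\<Sum>l<N. E l)" by (rule sum_bound_all[OF E0 j])
    finally show ?thesis by simp
  qed
  then show "\<exists>B. \<forall>h'\<in>(\<lambda>h. aff M b m (\<lambda>i. sigma_pow k (h i))) ` H. \<forall>i<N. \<bar>h' i\<bar> \<le> B"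
    by blast
qed

lemma okp_exists: "bndf H \<Longrightarrow> \<exists>R>0. \<forall>h\<in>H. okp k R As ms h"
proof (induction As ms arbitrary: H rule: kd.induct)
  case (1 M b As m ms)
  obtain R1 where R1: "R1 > 0" "\<forall>h'\<in>(\<lambda>h. aff M b m (\<lambda>i. sigma_pow k (h i))) ` H. okp k R1 As ms h'"
    using "1.IH"[OF aff_bndf[OF "1.prems"]] by blast
  obtain B where B: "\<forall>h\<in>H. \<forall>i<max m 1. \<bar>h i\<bar> \<le> B" using "1.prems" unfolding bndf_def by blast
  define R where "R = R1 + \<bar>B\<bar> + \<bar>B\<bar> ^ k + 1"
  have Rge: "R1 \<le> R" unfolding R_def by simp
  have "okp k R ((M, b) # As) (m # ms) h" if h: "h \<in> H" for h
  proof -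
    have "h i < R \<and> sigma_pow k (h i) < R" if i: "i < max m 1" for i
    proof -
      have hb: "\<bar>h i\<bar> \<le> B" using B h i by auto
      have "\<bar>sigma_pow k (h i)\<bar> \<le> \<bar>B\<bar> ^ k" by (rule sig_bound[OF hb])
      moreover have "0 \<le> \<bar>B\<bar> ^ k" by simp
      ultimately show ?thesis using hb R1(1) abs_ge_self[of "h i"] abs_ge_self[of "sigma_pow k (h i)"] abs_ge_self[of B]
        unfolding R_def by linarith
    qed
    moreover have "okp k R As ms (aff M b m (\<lambda>i. sigma_pow k (h i)))"
      using okp_mono R1(2) h Rge by blast
    ultimately show ?thesis by simp
  qed
  moreover have "R > 0" unfolding R_def using R1(1) zero_le_power[of "\<bar>B\<bar>" k] abs_ge_zero[of B] by linarith
  ultimately show ?case by blast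
qed (auto intro: exI[of _ 1])


lemma input_bndf:
  fixes \<Omega> :: "(real^'d) set"
  assumes "\<forall>x\<in>\<Omega>. norm x \<le> C"
  shows "bndf ((aff_in M0 b0) ` \<Omega>)"
  unfolding bndf_def
proof
  fix N
  define E where "E j = (\<Sum>i\<in>UNIV. \<bar>M0 j i\<bar> * \<bar>C\<bar>) + \<bar>b0 j\<bar>" for j
  have E0: "0 \<le> E j" for j unfolding E_def by (intro add_nonneg_nonneg sum_nonneg) auto
  have "\<bar>aff_in M0 b0 x j\<bar> \<le> (\<Sum>l<N. E l)" if x: "x \<in> \<Omega>" and j: "j < N" for x j
  proof -
    have "\<bar>aff_in M0 b0 x j\<bar> \<le> \<bar>\<Sum>i\<in>UNIV. M0 j i * x $ i\<bar> + \<bar>b0 j\<bar>"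
      unfolding aff_in_def by (rule abs_triangle_ineq)
    also have "\<bar>\<Sum>i\<in>UNIV. M0 j i * x $ i\<bar> \<le> (\<Sum>i\<in>UNIV. \<bar>M0 j i * x $ i\<bar>)"
      by (rule sum_abs)
    also have "\<dots> \<le> (\<Sum>i\<in>UNIV. \<bar>M0 j i\<bar> * \<bar>C\<bar>)"
    proof (rule sum_mono)
      fix i
      have "\<bar>x $ i\<bar> \<le> norm x" by (rule component_le_norm_cart)
      also have "\<dots> \<le> \<bar>C\<bar>" using assms x by force
      finally show "\<bar>M0 j i * x $ i\<bar> \<le> \<bar>M0 j i\<bar> * \<bar>C\<bar>"
        by (simp add: abs_mult mult_left_mono)
    qed
    also have "(\<Sum>i\<in>UNIV. \<bar>M0 j i\<bar> * \<bar>C\<bar>) + \<bar>b0 j\<bar> = E j" by (simp add: E_def)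
    also have "E j \<le> (\<Sum>l<N. E l)" by (rule sum_bound_all[OF E0 j])
    finally show ?thesis by simp
  qed
  then show "\<exists>B. \<forall>h\<in>aff_in M0 b0 ` \<Omega>. \<forall>i<N. \<bar>h i\<bar> \<le> B" by blast
qed

theorem mainTheorem4:
  fixes \<Omega> :: "(real^'d) set" and f :: "real^'d \<Rightarrow> real" and k W L :: nat
  assumes "bounded \<Omega>" and "open \<Omega>" and "connected \<Omega>" and "\<Omega> \<noteq> {}"
    and "1 \<le> k" and "1 \<le> W" and "1 \<le> L"
    and "is_mlp k W L f"
  shows "\<exists>(g :: real^'d \<Rightarrow> real) D. D \<le> 2 * L \<and> is_kan k 2 W D g \<and> (\<forall>x\<in>\<Omega>. g x = f x)"
proof -
  note k = assms(5) and W = assms(6) and L = assms(7)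
  obtain M0 :: "nat \<Rightarrow> 'd \<Rightarrow> real" and b0 As hs where
    lA: "length As = L - 1" and lh: "length hs = L - 1" and hW: "\<forall>m\<in>set hs. m \<le> W"
    and fe: "\<forall>x. f x = mlp_eval k M0 b0 As hs x"
    using assms(8) unfolding is_mlp_def by blast
  obtain C where C: "\<forall>x\<in>\<Omega>. norm x \<le> C" using assms(1) unfolding bounded_iff by blast
  obtain R1 where R1: "R1 > 0" "\<forall>h\<in>(aff_in M0 b0) ` \<Omega>. okp k R1 As hs h"
    using okp_exists[OF input_bndf[OF C]] by blast
  define R where "R = R1 + \<bar>C\<bar> + 1"
  have R: "R > 0" and RR1: "R1 \<le> R" unfolding R_def using R1(1) by auto
  define \<Phi>0 :: "nat \<Rightarrow> 'd \<Rightarrow> real \<Rightarrow> real" where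
    "\<Phi>0 = (\<lambda>j i. splf k R (affc k R (M0 j i) (b0 j / real CARD('d))))"
  define g where "g = kan_eval \<Phi>0 (kl k R As hs) (kd As hs)"
  define D where "D = 2 * L - 1"
  have inp: "kan_in \<Phi>0 x = aff_in M0 b0 x" if x: "x \<in> \<Omega>" for x
  proof
    fix j
    have "kan_in \<Phi>0 x j = (\<Sum>i\<in>UNIV. M0 j i * x $ i + b0 j / real CARD('d))"
      unfolding kan_in_def
    proof (rule sum.cong)
      fix i
      have "\<bar>x $ i\<bar> \<le> norm x" by (rule component_le_norm_cart)
      also have "\<dots> \<le> \<bar>C\<bar>" using C x by force
      finally have "- R \<le> x $ i" "x $ i < R" unfolding R_def using R1(1) by auto
      then show "\<Phi>0 j i (x $ i) = M0 j i * x $ i + b0 j / real CARD('d)"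
        unfolding \<Phi>0_def using aff_ok[OF k R] by simp
    qed simp
    also have "\<dots> = aff_in M0 b0 x j" by (simp add: sum.distrib aff_in_def)
    finally show "kan_in \<Phi>0 x j = aff_in M0 b0 x j" .
  qed
  have "g x = f x" if x: "x \<in> \<Omega>" for x
  proof -
    have ok: "okp k R As hs (aff_in M0 b0 x)" using R1(2) x RR1 okp_mono by blast
    show ?thesis using fe by (simp add: g_def kan_eval_def mlp_eval_def inp[OF x] tail_ok[OF k R ok])
  qed
  moreover have "is_kan k 2 W D g"
    unfolding is_kan_def
  proof (intro conjI exI[of _ R] exI[of _ \<Phi>0] exI[of _ "kl k R As hs"] exI[of _ "kd As hs"])
    show "1 \<le> D" unfolding D_def using L by simp
    show "0 < R" by (rule R)
    show "length (kl k R As hs) = D - 1" using kl_len[of As hs] lA lh unfolding D_def by simp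
    show "length (kd As hs) = D - 1" using kd_len[of As hs] lA lh unfolding D_def by simp
    show "\<forall>m\<in>set (kd As hs). m \<le> W" using kd_set[of _ As hs] hW W by fastforce
    show "\<forall>j i. kan_basis_fun k 2 R (\<Phi>0 j i)" unfolding \<Phi>0_def by (simp add: splf_basis)
    show "\<forall>\<Phi>\<in>set (kl k R As hs). \<forall>j i. kan_basis_fun k 2 R (\<Phi> j i)"
      using kl_set splf_basis by metis
    show "\<forall>x. g x = kan_eval \<Phi>0 (kl k R As hs) (kd As hs) x" by (simp add: g_def)
  qed
  moreover have "D \<le> 2 * L" unfolding D_def by simp
  ultimately show ?thesis by blast
qed

end
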